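(* Let $G$ be a 2-ichromatic ordered graph with vertices $v_1<\dots<v_{m+n}$ such that $\{v_1,\ldots,v_m\}$ and $\{v_{m+1},\ldots,v_{m+n}\}$ are the parts of an interval 2-coloring of $G$ (i.e., both are independent sets). If $v_1v_{m+1}$, $v_mv_{m+n}$ and $v_mv_{m+1}$ are edges of $G$, then $R(G)\ge 5r+1$, where $r=\min(m,n)-1$.
   Context: An ordered graph is a graph together with a specified linear ordering of its vertex set. An ordered graph $G$ is contained in an ordered graph $H$ if there is an order-preserving injection $V(G)\to V(H)$ mapping edges to edges. An interval coloring of an ordered graph is a partition of its vertex set into independent sets each consisting of consecutive vertices (called parts); an ordered graph is 2-ichromatic if its minimum number of parts in an interval coloring is 2. $R(G)$ denotes the 2-color ordered Ramsey number: the minimum $N$ such that every 2-coloring of the edges of the ordered complete graph on $N$ vertices contains a monochromatic copy of $G$. *)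

theory Defs
  imports Main
begin

text \<open>A red/blue colouring of the edges of the
ordered complete graph K_N on {0..<N} is a function c :: nat => nat => bool, where
c i j (for i < j < N) is the colour of edge ij.\<close>

definition ordered_graph :: "nat \<Rightarrow> (nat \<times> nat) set \<Rightarrow> bool" where
  "ordered_graph k E \<longleftrightarrow> (\<forall>(i,j)\<in>E. i < j \<and> j < k)"

definition independent :: "(nat \<times> nat) set \<Rightarrow> nat set \<Rightarrow> bool" where
  "independent E S \<longleftrightarrow> (\<forall>(i,j)\<in>E. \<not> (i \<in> S \<and> j \<in> S))"

definition has_mono_copy :: "nat \<Rightarrow> (nat \<times> nat) set \<Rightarrow> nat \<Rightarrow> (nat \<Rightarrow> nat \<Rightarrow> bool) \<Rightarrow> bool" where
  "has_mono_copy k E N c \<longleftrightarrow>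
     (\<exists>f b. strict_mono_on {..<k} f \<and> f ` {..<k} \<subseteq> {..<N} \<and>
            (\<forall>(i,j)\<in>E. c (f i) (f j) = b))"

definition ordered_ramsey :: "nat \<Rightarrow> (nat \<times> nat) set \<Rightarrow> nat" where
  "ordered_ramsey k E = (LEAST N. \<forall>c. has_mono_copy k E N c)"

definition interval_coloring :: "nat \<Rightarrow> (nat \<times> nat) set \<Rightarrow> nat list \<Rightarrow> bool" where
  "interval_coloring k E bs \<longleftrightarrow>
     (bs \<noteq> [] \<and> sorted_wrt (<) (0 # bs) \<and> last bs = k \<and>
          (\<forall>t < length bs. independent E {(0 # bs) ! t ..< bs ! t}))"

definition interval_chromatic :: "nat \<Rightarrow> (nat \<times> nat) set \<Rightarrow> nat" where
  "interval_chromatic k E = (LEAST q. \<exists>bs. length bs = q \<and> interval_coloring k E bs)"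

end

theory Submission
  imports Defs "HOL-Library.Ramsey"
begin

definition col :: "nat \<Rightarrow> nat \<Rightarrow> bool" where
  "col a b \<longleftrightarrow> (a,b) \<in> {(1,1),(1,3),(1,4),(2,2),(2,4),(3,4)}"

lemma lt5: "(x::nat) < 5 \<Longrightarrow> x = 0 \<or> x = 1 \<or> x = 2 \<or> x = 3 \<or> x = 4" by auto

lemma A0: "(\<forall>i<(0::nat). P i) = True" by simp
lemma tab: "\<forall>l<Suc(Suc(Suc(Suc(Suc 0)))). \<forall>k<l. \<forall>j<Suc k. \<forall>i<j. \<not> (col i k = b \<and> col j k = b \<and> col j l = b)"
  apply (simp only: All_less_Suc A0 simp_thms)
  apply (cases b; simp add: col_def)
  done

lemma col_table:
  assumes "i < j" "j \<le> k" "k < l" "l < 5"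
  shows "\<not> (col i k = b \<and> col j k = b \<and> col j l = b)"
proof -
  have "l < Suc(Suc(Suc(Suc(Suc 0))))" "j < Suc k" using assms by auto
  then show ?thesis using tab[of b] assms(1,3) by blast
qed

lemma smono_gap:
  assumes "strict_mono_on {..<K} f" "i \<le> j" "j < K"
  shows "f i + (j - i) \<le> (f j :: nat)"
  using assms(2,3)
proof (induction j)
  case 0 then show ?case by simp
next
  case (Suc j)
  show ?case
  proof (cases "i = Suc j")
    case True then show ?thesis by simp
  next
    case False
    then have "i \<le> j" using Suc by simp
    then have "f i + (j - i) \<le> f j" using Suc by simp
    moreover have "f j < f (Suc j)" using assms(1) Suc.prems
      by (intro strict_mono_onD[OF assms(1)]) auto
    ultimately show ?thesis using \<open>i \<le> j\<close> by simp
  qed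
qed

lemma noP:
  assumes "N \<le> 5 * r" "r \<ge> 1" "2 \<le> m" "2 \<le> n" "r \<le> m - 1" "r \<le> n - 1"
    and E: "(0, m) \<in> E" "(m - 1, m + n - 1) \<in> E" "(m - 1, m) \<in> E"
  shows "\<not> has_mono_copy (m + n) E N (\<lambda>p q. col (p div r) (q div r))"
proof
  assume "has_mono_copy (m + n) E N (\<lambda>p q. col (p div r) (q div r))"
  then obtain f b where sm: "strict_mono_on {..<m+n} f" and rng: "f ` {..<m+n} \<subseteq> {..<N}"
    and mono: "\<forall>(i,j)\<in>E. col (f i div r) (f j div r) = b"
    unfolding has_mono_copy_def by blast
  define x where "x = f 0"
  define y where "y = f (m - 1)"
  define z where "z = f m"
  define w where "w = f (m + n - 1)"
  have "x + (m - 1) \<le> y" unfolding x_def y_def using smono_gap[OF sm, of 0 "m-1"] assms by simp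
  hence xy: "x + r \<le> y" using assms by simp
  have yz: "y < z" unfolding y_def z_def using assms by (intro strict_mono_onD[OF sm]) auto
  have "z + (m + n - 1 - m) \<le> w" unfolding z_def w_def using smono_gap[OF sm, of m "m+n-1"] assms by simp
  hence zw: "z + r \<le> w" using assms by simp
  have "m + n - 1 < m + n" using assms by simp
  hence wN: "w < N" unfolding w_def using rng by blast
  have b1: "x div r < y div r"
  proof -
    have "(x + r) div r \<le> y div r" using xy by (simp add: div_le_mono)
    thus ?thesis using assms by simp
  qed
  have b2: "y div r \<le> z div r" using yz by (simp add: div_le_mono)
  have b3: "z div r < w div r"
  proof -
    have "(z + r) div r \<le> w div r" using zw by (simp add: div_le_mono)
    thus ?thesis using assms by simp
  qed
  have b4: "w div r < 5"
  proof -
    have "w < 5 * r" using wN assms(1) by simp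
    thus ?thesis by (intro less_mult_imp_div_less) (simp add: mult.commute)
  qed
  have "col (x div r) (z div r) = b" "col (y div r) (z div r) = b" "col (y div r) (w div r) = b"
    using mono E unfolding x_def y_def z_def w_def by auto
  thus False using col_table[OF b1 b2 b3 b4] by blast
qed

theorem corollary3p3:
  fixes m n :: nat and E :: "(nat \<times> nat) set"
  assumes "ordered_graph (m + n) E"
    and "interval_chromatic (m + n) E = 2"
    and "independent E {0..<m}"
    and "independent E {m..<m + n}"
    and "(0, m) \<in> E"
    and "(m - 1, m + n - 1) \<in> E"
    and "(m - 1, m) \<in> E"
  shows "ordered_ramsey (m + n) E \<ge> 5 * (min m n - 1) + 1"
proof -
  let ?P = "\<lambda>N. \<forall>c. has_mono_copy (m + n) E N c"
  have ex: "\<exists>N. ?P N"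
  proof -
    obtain R0 where R0: "\<forall>(V::nat set) (EE::nat set set). finite V \<and> card V \<ge> R0 \<longrightarrow>
        (\<exists>R \<subseteq> V. card R = m + n \<and> clique R EE \<or> card R = m + n \<and> indep R EE)"
      using ramsey2[of "m+n" "m+n"] by blast
    show ?thesis
    proof (intro exI allI)
      fix c :: "nat \<Rightarrow> nat \<Rightarrow> bool"
      define EE where "EE = {{i,j} | i j. i < j \<and> c i j}"
      obtain R b where R: "R \<subseteq> {..<R0}" "card R = m + n"
        and cl: "b \<longrightarrow> clique R EE" and ind: "\<not> b \<longrightarrow> indep R EE"
        using R0[rule_format, of "{..<R0}" EE] by auto
      have finR: "finite R" using R(1) finite_subset by blast
      define xs where "xs = sorted_list_of_set R"
      have len: "length xs = m + n" using R finR unfolding xs_def by simp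
      have sw: "sorted_wrt (<) xs" unfolding xs_def by simp
      have setxs: "set xs = R" unfolding xs_def using finR by simp
      define f where "f = (\<lambda>i. xs ! i)"
      have smf: "strict_mono_on {..<m+n} f"
        unfolding f_def by (rule strict_mono_onI) (use sw len in \<open>auto simp: sorted_wrt_nth_less\<close>)
      have inR: "i < m + n \<Longrightarrow> f i \<in> R" for i unfolding f_def using len setxs nth_mem by metis
      show "has_mono_copy (m + n) E R0 c"
        unfolding has_mono_copy_def
      proof (intro exI conjI)
        show "strict_mono_on {..<m+n} f" by fact
        show "f ` {..<m+n} \<subseteq> {..<R0}" using inR R(1) by auto
        show "\<forall>(i,j)\<in>E. c (f i) (f j) = b"
        proof (clarify)
          fix i j assume ij: "(i,j) \<in> E"
          then have "i < j" "j < m + n" using assms(1) unfolding ordered_graph_def by auto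
          then have lt: "f i < f j" and fi: "f i \<in> R" and fj: "f j \<in> R"
            using strict_mono_onD[OF smf] inR by auto
          have "{f i, f j} \<in> EE \<longleftrightarrow> c (f i) (f j)"
            unfolding EE_def using lt
            by (auto simp: doubleton_eq_iff)
          then show "c (f i) (f j) = b"
            using cl ind fi fj lt unfolding clique_def indep_def by (cases b) auto
        qed
      qed
    qed
  qed
  have m1: "0 < m" using assms(1,5) unfolding ordered_graph_def by auto
  have notP: "\<not> ?P N" if "N \<le> 5 * (min m n - 1)" for N
  proof (cases "min m n - 1 = 0")
    case True
    then have "N = 0" using that by simp
    moreover have "\<not> has_mono_copy (m + n) E 0 c" for c
      unfolding has_mono_copy_def using m1 by auto
    ultimately show ?thesis by blast
  next
    case False
    let ?r = "min m n - 1"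
    have h: "?r \<ge> 1" "2 \<le> m" "2 \<le> n" "?r \<le> m - 1" "?r \<le> n - 1" using False by auto
    show ?thesis
      using noP[OF that h assms(5,6,7)] by blast
  qed
  have Pl: "?P (ordered_ramsey (m + n) E)" unfolding ordered_ramsey_def using ex by (rule LeastI_ex)
  show ?thesis
  proof (rule ccontr)
    assume "\<not> ?thesis"
    hence "ordered_ramsey (m + n) E \<le> 5 * (min m n - 1)" by simp
    thus False using notP Pl by blast
  qed
qed

end
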